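(* Let $P,P'$ be polytopes with face posets $L,L'$ respectively. Suppose $\dim(P)\ge\dim(P')$ and that $\phi:L\to L'$ is a map satisfying $\phi(x)\le\phi(y)$ if and only if $x\le y$, for all $x,y\in L$. Then $\phi$ is an isomorphism of posets, i.e. a combinatorial equivalence between $P$ and $P'$.
   Context: Here the face poset of a polytope means the poset of its nonempty proper faces ordered by inclusion (whose order complex is the barycentric subdivision of the boundary complex). *)

theory Defs
  imports "HOL-Analysis.Analysis"
begin

definition face_poset :: "'a::euclidean_space set \<Rightarrow> 'a set set" where
  "face_poset P = {F. F face_of P \<and> F \<noteq> {} \<and> F \<noteq> P}"

end

theory Submission
  imports Defs
begin




lemma avoid_affine:
  fixes S :: "'a::euclidean_space set"
  assumes "finite \<A>" "convex S" "S \<noteq> {}" "\<forall>A\<in>\<A>. affine A \<and> aff_dim A < aff_dim S"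
  shows "\<exists>x\<in>rel_interior S. x \<notin> \<Union>\<A>"
  using assms
proof (induction \<A> arbitrary: S rule: finite_induct)
  case empty
  then show ?case using rel_interior_eq_empty by auto
next
  case (insert T \<A>)
  have cri: "convex (rel_interior S)" using insert convex_rel_interior by blast
  have adr: "aff_dim (rel_interior S) = aff_dim S" using insert rel_interior_aff_dim by blast
  have "aff_dim T < aff_dim (rel_interior S)" using insert adr by auto
  then have "closure (rel_interior S - T) = closure (rel_interior S)"
    using dense_complement_convex cri by blast
  moreover have "rel_interior S \<noteq> {}" using insert rel_interior_eq_empty by blast
  ultimately have "rel_interior S - T \<noteq> {}" by (metis closure_eq_empty)
  then obtain x where x: "x \<in> rel_interior S" "x \<notin> T" by blast
  have "closed T" using insert by (metis affine_hull_eq closed_affine_hull insert_iff)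
  then have "open (- T)" by auto
  then obtain e where e0: "e > 0" "ball x e \<subseteq> - T"
    using x(2) open_contains_ball by blast
  then have e: "e > 0" "ball x e \<inter> T = {}" by auto
  define S' where "S' = rel_interior S \<inter> ball x e"
  have cS': "convex S'" unfolding S'_def using cri by (simp add: convex_Int)
  have neS': "S' \<noteq> {}" unfolding S'_def using x e by auto
  have "aff_dim S' = aff_dim (rel_interior S)"
    unfolding S'_def using aff_dim_convex_Int_open[OF cri, of "ball x e"] neS' S'_def by auto
  then have "\<forall>A\<in>\<A>. affine A \<and> aff_dim A < aff_dim S'" using insert adr by auto
  then obtain z where z: "z \<in> rel_interior S'" "z \<notin> \<Union>\<A>" using insert.IH cS' neS' by blast
  have "z \<in> S'" using z rel_interior_subset by blast
  then show ?case using z e unfolding S'_def by auto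
qed




lemma aff3_obtain:
  fixes c p q y :: "'a::euclidean_space"
  assumes "y \<in> affine hull {c,p,q}"
  shows "\<exists>u v w. u + v + w = 1 \<and> y = u *\<^sub>R c + v *\<^sub>R p + w *\<^sub>R q"
    using assms unfolding affine_hull_3 by blast

lemma solve3:
  fixes c p q y :: "'a::euclidean_space"
  assumes "u \<noteq> 0" "y = u *\<^sub>R c + v *\<^sub>R p + w *\<^sub>R q"
  shows "c = (1/u) *\<^sub>R y + (-(v/u)) *\<^sub>R p + (-(w/u)) *\<^sub>R q"
proof -
  have e: "u *\<^sub>R c = y - v *\<^sub>R p - w *\<^sub>R q" using assms(2) by simp
  have "c = (1/u) *\<^sub>R (u *\<^sub>R c)" using assms(1) by simp
  also have "\<dots> = (1/u) *\<^sub>R y + (-(v/u)) *\<^sub>R p + (-(w/u)) *\<^sub>R q"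
    unfolding e by (simp add: scaleR_diff_right)
  finally show ?thesis .
qed

lemma solve2:
  fixes p q y :: "'a::euclidean_space"
  assumes "w \<noteq> 0" "y = v *\<^sub>R p + w *\<^sub>R q"
  shows "q = (1/w) *\<^sub>R y + (-(v/w)) *\<^sub>R p"
proof -
  have e: "w *\<^sub>R q = y - v *\<^sub>R p" using assms(2) by simp
  have "q = (1/w) *\<^sub>R (w *\<^sub>R q)" using assms(1) by simp
  also have "\<dots> = (1/w) *\<^sub>R y + (-(v/w)) *\<^sub>R p"
    unfolding e by (simp add: scaleR_diff_right)
  finally show ?thesis .
qed

lemma in_aff3:
  fixes c p q y :: "'a::euclidean_space"
  assumes "c = a *\<^sub>R y + b *\<^sub>R p + d *\<^sub>R q" "a + b + d = 1"
  shows "c \<in> affine hull {y,p,q}" unfolding affine_hull_3 using assms by blast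

lemma in_aff2:
  fixes p q y :: "'a::euclidean_space"
  assumes "q = a *\<^sub>R y + b *\<^sub>R p" "a + b = 1"
  shows "q \<in> affine hull {y,p}" unfolding affine_hull_2 using assms by blast

lemma plane_avoid:
  fixes c p q y :: "'a::euclidean_space"
  assumes "y \<in> K" "y \<in> affine hull {c,p,q}"
    "c \<notin> affine hull (insert p (insert q K))" "q \<notin> affine hull (insert p K)"
    "p \<notin> affine hull K"
  shows False
proof -
  obtain u v w where uvw: "u + v + w = 1" "y = u *\<^sub>R c + v *\<^sub>R p + w *\<^sub>R q"
    using aff3_obtain[OF assms(2)] by blast
  have h1: "affine hull {y,p,q} \<subseteq> affine hull (insert p (insert q K))"
    using assms(1) by (intro hull_mono) auto
  have h2: "affine hull {y,p} \<subseteq> affine hull (insert p K)"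
    using assms(1) by (intro hull_mono) auto
  show False
  proof (cases "u = 0")
    case False
    have ceq: "c = (1/u) *\<^sub>R y + (-(v/u)) *\<^sub>R p + (-(w/u)) *\<^sub>R q"
      using solve3[OF False uvw(2)] .
    have s1: "1/u + (-(v/u)) + (-(w/u)) = (1 - v - w)/u" by (simp add: diff_divide_distrib)
    have "1 - v - w = u" using uvw(1) by linarith
    then have "1/u + (-(v/u)) + (-(w/u)) = 1" using False s1 by simp
    then have "c \<in> affine hull {y,p,q}" using in_aff3[OF ceq] by blast
    then show False using assms(3) h1 by blast
  next
    case True
    show False
    proof (cases "w = 0")
      case True
      have "v = 1" using uvw(1) True \<open>u = 0\<close> by simp
      then have "y = p" using \<open>u = 0\<close> True uvw(2) by simp
      then have "p \<in> K" using assms(1) by simp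
      then have "p \<in> affine hull K" by (rule hull_inc)
      then show False using assms(5) by contradiction
    next
      case False
      have y2: "y = v *\<^sub>R p + w *\<^sub>R q" using uvw(2) \<open>u = 0\<close> by simp
      have qeq: "q = (1/w) *\<^sub>R y + (-(v/w)) *\<^sub>R p" using solve2[OF False y2] .
      have s1: "1/w + (-(v/w)) = (1 - v)/w" by (simp add: diff_divide_distrib)
      have "1 - v = w" using uvw(1) \<open>u = 0\<close> by linarith
      then have "1/w + (-(v/w)) = 1" using False s1 by simp
      then have "q \<in> affine hull {y,p}" using in_aff2[OF qeq] by blast
      then show False using assms(4) h2 by blast
    qed
  qed
qed


lemma facet_subset_eq:
  fixes S :: "'a::euclidean_space set"
  assumes "F facet_of S" "G facet_of S" "F \<subseteq> G"
  shows "F = G"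
proof (rule ccontr)
  assume "F \<noteq> G"
  have "F face_of G"
    using assms face_of_subset facet_of_imp_face_of facet_of_imp_subset by blast
  then have "aff_dim F < aff_dim G"
    using face_of_aff_dim_lt \<open>F \<noteq> G\<close> assms(2) face_of_imp_convex facet_of_imp_face_of by blast
  then show False using assms unfolding facet_of_def by simp
qed




lemma sign_H:
  fixes fi fj fk :: "'a \<Rightarrow> real"
  assumes "\<forall>x\<in>Q. lj * fj x + li * fi x + lk * fk x = 0" "lj > 0" "li \<le> 0" "lk \<le> 0"
    "\<forall>x\<in>Q. fi x \<le> 0" "\<forall>x\<in>Q. fj x \<le> 0" "\<forall>x\<in>Q. fk x \<le> 0" "\<exists>x\<in>Q. fj x < 0"
    "\<not> {x\<in>Q. fj x = 0} \<subseteq> {x\<in>Q. fi x = 0}" "\<not> {x\<in>Q. fj x = 0} \<subseteq> {x\<in>Q. fk x = 0}"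
  shows False
proof -
  have a: "li * fi x \<ge> 0" "lk * fk x \<ge> 0" if "x \<in> Q" for x
    using assms that by (auto intro: mult_nonpos_nonpos)
  show False
  proof (cases "li < 0")
    case True
    have "{x\<in>Q. fj x = 0} \<subseteq> {x\<in>Q. fi x = 0}"
    proof clarify
      fix x assume "x \<in> Q" "fj x = 0"
      have "lj * fj x + li * fi x + lk * fk x = 0" using assms(1) \<open>x \<in> Q\<close> by blast
      then have "li * fi x + lk * fk x = 0" using \<open>fj x = 0\<close> by simp
      then have "li * fi x = 0" using a[of x] \<open>x \<in> Q\<close> by linarith
      then show "fi x = 0" using True by simp
    qed
    then show False using assms by blast
  next
    case False
    show False
    proof (cases "lk < 0")
      case True
      have "{x\<in>Q. fj x = 0} \<subseteq> {x\<in>Q. fk x = 0}"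
      proof clarify
        fix x assume "x \<in> Q" "fj x = 0"
        have "lj * fj x + li * fi x + lk * fk x = 0" using assms(1) \<open>x \<in> Q\<close> by blast
        then have "li * fi x + lk * fk x = 0" using \<open>fj x = 0\<close> by simp
        then have "lk * fk x = 0" using a[of x] \<open>x \<in> Q\<close> by linarith
        then show "fk x = 0" using True by simp
      qed
      then show False using assms by blast
    next
      case False
      then have "li = 0" "lk = 0" using \<open>\<not> li < 0\<close> assms by auto
      then show False using assms by auto
    qed
  qed
qed

lemma sign_H0:
  fixes fi fj fk :: "'a \<Rightarrow> real"
  assumes "\<forall>x\<in>Q. lj * fj x + li * fi x + lk * fk x = 0" "lj > 0" "li \<ge> 0" "lk \<ge> 0"
    "\<forall>x\<in>Q. fi x \<le> 0" "\<forall>x\<in>Q. fj x \<le> 0" "\<forall>x\<in>Q. fk x \<le> 0" "\<exists>x\<in>Q. fj x < 0"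
  shows False
proof -
  obtain x where x: "x \<in> Q" "fj x < 0" using assms by blast
  have "li * fi x \<le> 0" "lk * fk x \<le> 0" "lj * fj x < 0"
    using assms x by (auto intro: mult_nonneg_nonpos mult_pos_neg)
  then show False using assms(1) x by force
qed

lemma sign_contra:
  fixes f1 f2 f3 :: "'a \<Rightarrow> real"
  assumes eq: "\<forall>x\<in>Q. l1 * f1 x + l2 * f2 x + l3 * f3 x = 0"
    and nz: "l1 \<noteq> 0 \<or> l2 \<noteq> 0 \<or> l3 \<noteq> 0"
    and le: "\<forall>x\<in>Q. f1 x \<le> 0" "\<forall>x\<in>Q. f2 x \<le> 0" "\<forall>x\<in>Q. f3 x \<le> 0"
    and lt: "\<exists>x\<in>Q. f1 x < 0" "\<exists>x\<in>Q. f2 x < 0" "\<exists>x\<in>Q. f3 x < 0"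
    and n12: "\<not> {x\<in>Q. f1 x = 0} \<subseteq> {x\<in>Q. f2 x = 0}"
    and n13: "\<not> {x\<in>Q. f1 x = 0} \<subseteq> {x\<in>Q. f3 x = 0}"
    and n21: "\<not> {x\<in>Q. f2 x = 0} \<subseteq> {x\<in>Q. f1 x = 0}"
    and n23: "\<not> {x\<in>Q. f2 x = 0} \<subseteq> {x\<in>Q. f3 x = 0}"
    and n31: "\<not> {x\<in>Q. f3 x = 0} \<subseteq> {x\<in>Q. f1 x = 0}"
    and n32: "\<not> {x\<in>Q. f3 x = 0} \<subseteq> {x\<in>Q. f2 x = 0}"
  shows False
proof -
  have e1: "\<forall>x\<in>Q. l1 * f1 x + l2 * f2 x + l3 * f3 x = 0" using eq by auto
  have e2: "\<forall>x\<in>Q. l2 * f2 x + l1 * f1 x + l3 * f3 x = 0" using eq by (auto simp: algebra_simps)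
  have e3: "\<forall>x\<in>Q. l3 * f3 x + l1 * f1 x + l2 * f2 x = 0" using eq by (auto simp: algebra_simps)
  have m1: "\<forall>x\<in>Q. (-l1) * f1 x + (-l2) * f2 x + (-l3) * f3 x = 0" using eq by (auto simp: algebra_simps)
  have m2: "\<forall>x\<in>Q. (-l2) * f2 x + (-l1) * f1 x + (-l3) * f3 x = 0" using eq by (auto simp: algebra_simps)
  have m3: "\<forall>x\<in>Q. (-l3) * f3 x + (-l1) * f1 x + (-l2) * f2 x = 0" using eq by (auto simp: algebra_simps)
  have c1: "\<not> (l1 > 0 \<and> l2 \<le> 0 \<and> l3 \<le> 0)" using sign_H[OF e1 _ _ _ le(2) le(1) le(3) lt(1) n12 n13] by auto
  have c2: "\<not> (l2 > 0 \<and> l1 \<le> 0 \<and> l3 \<le> 0)" using sign_H[OF e2 _ _ _ le(1) le(2) le(3) lt(2) n21 n23] by auto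
  have c3: "\<not> (l3 > 0 \<and> l1 \<le> 0 \<and> l2 \<le> 0)" using sign_H[OF e3 _ _ _ le(1) le(3) le(2) lt(3) n31 n32] by auto
  have d1: "\<not> (l1 < 0 \<and> l2 \<ge> 0 \<and> l3 \<ge> 0)" using sign_H[OF m1 _ _ _ le(2) le(1) le(3) lt(1) n12 n13] by auto
  have d2: "\<not> (l2 < 0 \<and> l1 \<ge> 0 \<and> l3 \<ge> 0)" using sign_H[OF m2 _ _ _ le(1) le(2) le(3) lt(2) n21 n23] by auto
  have d3: "\<not> (l3 < 0 \<and> l1 \<ge> 0 \<and> l2 \<ge> 0)" using sign_H[OF m3 _ _ _ le(1) le(3) le(2) lt(3) n31 n32] by auto
  have z1: "\<not> (l1 > 0 \<and> l2 \<ge> 0 \<and> l3 \<ge> 0)" using sign_H0[OF e1 _ _ _ le(2) le(1) le(3) lt(1)] by auto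
  have z2: "\<not> (l2 > 0 \<and> l1 \<ge> 0 \<and> l3 \<ge> 0)" using sign_H0[OF e2 _ _ _ le(1) le(2) le(3) lt(2)] by auto
  have z3: "\<not> (l3 > 0 \<and> l1 \<ge> 0 \<and> l2 \<ge> 0)" using sign_H0[OF e3 _ _ _ le(1) le(3) le(2) lt(3)] by auto
  have w1: "\<not> (l1 < 0 \<and> l2 \<le> 0 \<and> l3 \<le> 0)" using sign_H0[OF m1 _ _ _ le(2) le(1) le(3) lt(1)] by auto
  have w2: "\<not> (l2 < 0 \<and> l1 \<le> 0 \<and> l3 \<le> 0)" using sign_H0[OF m2 _ _ _ le(1) le(2) le(3) lt(2)] by auto
  have w3: "\<not> (l3 < 0 \<and> l1 \<le> 0 \<and> l2 \<le> 0)" using sign_H0[OF m3 _ _ _ le(1) le(3) le(2) lt(3)] by auto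
  show False
  proof (rule linorder_cases[of l1 0])
    assume s1: "l1 < 0"
    show False
    proof (rule linorder_cases[of l2 0])
      assume s2: "l2 < 0"
      show False
      proof (rule linorder_cases[of l3 0])
        assume s3: "l3 < 0"
        have "l1 < 0 \<and> l2 \<le> 0 \<and> l3 \<le> 0" using s1 s2 s3 by auto
        then show False using w1 by blast
      next
        assume s3: "l3 = 0"
        have "l1 < 0 \<and> l2 \<le> 0 \<and> l3 \<le> 0" using s1 s2 s3 by auto
        then show False using w1 by blast
      next
        assume s3: "0 < l3"
        have "0 < l3 \<and> l1 \<le> 0 \<and> l2 \<le> 0" using s1 s2 s3 by auto
        then show False using c3 by blast
      qed
    next
      assume s2: "l2 = 0"
      show False
      proof (rule linorder_cases[of l3 0])
        assume s3: "l3 < 0"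
        have "l1 < 0 \<and> l2 \<le> 0 \<and> l3 \<le> 0" using s1 s2 s3 by auto
        then show False using w1 by blast
      next
        assume s3: "l3 = 0"
        have "l1 < 0 \<and> l2 \<le> 0 \<and> l3 \<le> 0" using s1 s2 s3 by auto
        then show False using w1 by blast
      next
        assume s3: "0 < l3"
        have "0 < l3 \<and> l1 \<le> 0 \<and> l2 \<le> 0" using s1 s2 s3 by auto
        then show False using c3 by blast
      qed
    next
      assume s2: "0 < l2"
      show False
      proof (rule linorder_cases[of l3 0])
        assume s3: "l3 < 0"
        have "0 < l2 \<and> l1 \<le> 0 \<and> l3 \<le> 0" using s1 s2 s3 by auto
        then show False using c2 by blast
      next
        assume s3: "l3 = 0"
        have "0 < l2 \<and> l1 \<le> 0 \<and> l3 \<le> 0" using s1 s2 s3 by auto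
        then show False using c2 by blast
      next
        assume s3: "0 < l3"
        have "l1 < 0 \<and> l2 \<ge> 0 \<and> l3 \<ge> 0" using s1 s2 s3 by auto
        then show False using d1 by blast
      qed
    qed
  next
    assume s1: "l1 = 0"
    show False
    proof (rule linorder_cases[of l2 0])
      assume s2: "l2 < 0"
      show False
      proof (rule linorder_cases[of l3 0])
        assume s3: "l3 < 0"
        have "l2 < 0 \<and> l1 \<le> 0 \<and> l3 \<le> 0" using s1 s2 s3 by auto
        then show False using w2 by blast
      next
        assume s3: "l3 = 0"
        have "l2 < 0 \<and> l1 \<le> 0 \<and> l3 \<le> 0" using s1 s2 s3 by auto
        then show False using w2 by blast
      next
        assume s3: "0 < l3"
        have "0 < l3 \<and> l1 \<le> 0 \<and> l2 \<le> 0" using s1 s2 s3 by auto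
        then show False using c3 by blast
      qed
    next
      assume s2: "l2 = 0"
      show False
      proof (rule linorder_cases[of l3 0])
        assume s3: "l3 < 0"
        have "l3 < 0 \<and> l1 \<le> 0 \<and> l2 \<le> 0" using s1 s2 s3 by auto
        then show False using w3 by blast
      next
        assume s3: "l3 = 0"
        show False using nz s1 s2 s3 by simp
      next
        assume s3: "0 < l3"
        have "0 < l3 \<and> l1 \<ge> 0 \<and> l2 \<ge> 0" using s1 s2 s3 by auto
        then show False using z3 by blast
      qed
    next
      assume s2: "0 < l2"
      show False
      proof (rule linorder_cases[of l3 0])
        assume s3: "l3 < 0"
        have "0 < l2 \<and> l1 \<le> 0 \<and> l3 \<le> 0" using s1 s2 s3 by auto
        then show False using c2 by blast
      next
        assume s3: "l3 = 0"
        have "0 < l2 \<and> l1 \<ge> 0 \<and> l3 \<ge> 0" using s1 s2 s3 by auto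
        then show False using z2 by blast
      next
        assume s3: "0 < l3"
        have "0 < l2 \<and> l1 \<ge> 0 \<and> l3 \<ge> 0" using s1 s2 s3 by auto
        then show False using z2 by blast
      qed
    qed
  next
    assume s1: "0 < l1"
    show False
    proof (rule linorder_cases[of l2 0])
      assume s2: "l2 < 0"
      show False
      proof (rule linorder_cases[of l3 0])
        assume s3: "l3 < 0"
        have "0 < l1 \<and> l2 \<le> 0 \<and> l3 \<le> 0" using s1 s2 s3 by auto
        then show False using c1 by blast
      next
        assume s3: "l3 = 0"
        have "0 < l1 \<and> l2 \<le> 0 \<and> l3 \<le> 0" using s1 s2 s3 by auto
        then show False using c1 by blast
      next
        assume s3: "0 < l3"
        have "l2 < 0 \<and> l1 \<ge> 0 \<and> l3 \<ge> 0" using s1 s2 s3 by auto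
        then show False using d2 by blast
      qed
    next
      assume s2: "l2 = 0"
      show False
      proof (rule linorder_cases[of l3 0])
        assume s3: "l3 < 0"
        have "0 < l1 \<and> l2 \<le> 0 \<and> l3 \<le> 0" using s1 s2 s3 by auto
        then show False using c1 by blast
      next
        assume s3: "l3 = 0"
        have "0 < l1 \<and> l2 \<ge> 0 \<and> l3 \<ge> 0" using s1 s2 s3 by auto
        then show False using z1 by blast
      next
        assume s3: "0 < l3"
        have "0 < l1 \<and> l2 \<ge> 0 \<and> l3 \<ge> 0" using s1 s2 s3 by auto
        then show False using z1 by blast
      qed
    next
      assume s2: "0 < l2"
      show False
      proof (rule linorder_cases[of l3 0])
        assume s3: "l3 < 0"
        have "l3 < 0 \<and> l1 \<ge> 0 \<and> l2 \<ge> 0" using s1 s2 s3 by auto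
        then show False using d3 by blast
      next
        assume s3: "l3 = 0"
        have "0 < l1 \<and> l2 \<ge> 0 \<and> l3 \<ge> 0" using s1 s2 s3 by auto
        then show False using z1 by blast
      next
        assume s3: "0 < l3"
        have "0 < l1 \<and> l2 \<ge> 0 \<and> l3 \<ge> 0" using s1 s2 s3 by auto
        then show False using z1 by blast
      qed
    qed
  qed
qed




lemma ridge_at_most_two:
  fixes Q :: "'a::euclidean_space set"
  assumes Q: "polytope Q" and R: "R face_of Q" "R \<noteq> {}" "aff_dim R = aff_dim Q - 2"
    and G: "G1 facet_of Q" "G2 facet_of Q" "G3 facet_of Q" "R \<subseteq> G1" "R \<subseteq> G2" "R \<subseteq> G3"
    and d: "G1 \<noteq> G2" "G1 \<noteq> G3" "G2 \<noteq> G3"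
  shows False
proof -
  have pQ: "polyhedron Q" using Q polytope_imp_polyhedron by blast
  obtain a1 b1 where a1: "a1 \<noteq> 0" "Q \<subseteq> {x. a1 \<bullet> x \<le> b1}" "G1 = Q \<inter> {x. a1 \<bullet> x = b1}"
    by (rule facet_of_polyhedron[OF pQ G(1)])
  obtain a2 b2 where a2: "a2 \<noteq> 0" "Q \<subseteq> {x. a2 \<bullet> x \<le> b2}" "G2 = Q \<inter> {x. a2 \<bullet> x = b2}"
    by (rule facet_of_polyhedron[OF pQ G(2)])
  obtain a3 b3 where a3: "a3 \<noteq> 0" "Q \<subseteq> {x. a3 \<bullet> x \<le> b3}" "G3 = Q \<inter> {x. a3 \<bullet> x = b3}"
    by (rule facet_of_polyhedron[OF pQ G(3)])
  obtain y where y: "y \<in> R" using R(2) by blast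
  have RQ: "R \<subseteq> Q" using R(1) face_of_imp_subset by blast
  have yQ0: "y \<in> Q" using y RQ by (rule subsetD[rotated])
  have yb: "a1 \<bullet> y = b1" "a2 \<bullet> y = b2" "a3 \<bullet> y = b3"
    using y G(4,5,6) a1(3) a2(3) a3(3) by auto
  have hR: "affine hull R \<subseteq> {x. ai \<bullet> x = bi}" if "R \<subseteq> {x. ai \<bullet> x = bi}" for ai bi
    using hull_minimal[OF that, of affine] affine_hyperplane by blast
  have R1: "R \<subseteq> {x. a1 \<bullet> x = b1}" using G(4) a1(3) by auto
  have R2: "R \<subseteq> {x. a2 \<bullet> x = b2}" using G(5) a2(3) by auto
  have R3: "R \<subseteq> {x. a3 \<bullet> x = b3}" using G(6) a3(3) by auto
  define V where "V = (\<lambda>x. x - y) ` (affine hull Q)"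
  define W where "W = (\<lambda>x. x - y) ` (affine hull R)"
  have yQ: "y \<in> affine hull Q" using yQ0 by (rule hull_inc)
  have yR: "y \<in> affine hull R" using y by (rule hull_inc)
  have sV: "subspace V" unfolding V_def by (rule affine_diffs_subspace_subtract[OF affine_affine_hull yQ])
  have sW: "subspace W" unfolding W_def by (rule affine_diffs_subspace_subtract[OF affine_affine_hull yR])
  have dV: "aff_dim Q = int (dim V)"
    using aff_dim_eq_dim_subtract[of y "affine hull Q"] yQ unfolding V_def by simp
  have dW: "aff_dim R = int (dim W)"
    using aff_dim_eq_dim_subtract[of y "affine hull R"] yR unfolding W_def by simp
  have WV: "W \<subseteq> V" unfolding V_def W_def by (intro image_mono hull_mono RQ)
  have dimWV: "dim V = dim W + 2" using dV dW R(3) by linarith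
  have "\<not> V \<subseteq> span W"
  proof
    assume "V \<subseteq> span W"
    then have "dim V \<le> dim W" by (rule dim_mono)
    then show False using dimWV by simp
  qed
  then obtain u where u: "u \<in> V" "u \<notin> span W" by blast
  have du: "dim (insert u W) = dim W + 1" using u(2) by (simp add: dim_insert)
  have "\<not> V \<subseteq> span (insert u W)"
  proof
    assume "V \<subseteq> span (insert u W)"
    then have "dim V \<le> dim (insert u W)" by (rule dim_mono)
    then show False using dimWV du by simp
  qed
  then obtain v where v: "v \<in> V" "v \<notin> span (insert u W)" by blast
  have dv: "dim (insert v (insert u W)) = dim W + 2" using v(2) du by (simp add: dim_insert)
  have BV: "span (insert v (insert u W)) = V"
  proof (rule subspace_dim_equal)
    show "subspace (span (insert v (insert u W)))" by simp
    show "subspace V" by (rule sV)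
    show "span (insert v (insert u W)) \<subseteq> V" using u v WV sV by (intro span_minimal) auto
    show "dim V \<le> dim (span (insert v (insert u W)))" using dv dimWV by simp
  qed
  have aW: "ai \<bullet> w = 0" if hw: "w \<in> W" and hr: "R \<subseteq> {x. ai \<bullet> x = bi}" and hy: "ai \<bullet> y = bi" for w ai bi
  proof -
    obtain z where z: "z \<in> affine hull R" "w = z - y" using hw unfolding W_def by blast
    have "ai \<bullet> z = bi" using hR[OF hr] z(1) by blast
    then show ?thesis using z(2) hy by (simp add: inner_diff_right)
  qed
  have decomp: "\<exists>k1 k2 w. w \<in> W \<and> x = k1 *\<^sub>R v + k2 *\<^sub>R u + w" if "x \<in> V" for x
  proof -
    have "x \<in> span (insert v (insert u W))" using that BV by simp
    then obtain k1 where k1: "x - k1 *\<^sub>R v \<in> span (insert u W)" unfolding span_insert by blast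
    then obtain k2 where k2: "(x - k1 *\<^sub>R v) - k2 *\<^sub>R u \<in> span W" unfolding span_insert by blast
    have "(x - k1 *\<^sub>R v) - k2 *\<^sub>R u \<in> W" using k2 sW by (metis span_eq_iff)
    moreover have "x = k1 *\<^sub>R v + k2 *\<^sub>R u + ((x - k1 *\<^sub>R v) - k2 *\<^sub>R u)" by simp
    ultimately show ?thesis by blast
  qed
  define X where "X = (a1 \<bullet> u, a2 \<bullet> u, a3 \<bullet> u)"
  define Y where "Y = (a1 \<bullet> v, a2 \<bullet> v, a3 \<bullet> v)"
  have cXY: "card {X, Y} \<le> 2" by (cases "X = Y") auto
  have dXY: "dim {X, Y} \<le> 2"
    using dim_le_card[of "{X,Y}" "{X,Y}"] span_superset cXY by force
  have "span {X, Y} \<subset> span (UNIV :: (real \<times> real \<times> real) set)"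
  proof -
    have "span {X, Y} \<noteq> span UNIV"
    proof
      assume "span {X, Y} = span UNIV"
      then have "dim {X, Y} = dim (UNIV :: (real \<times> real \<times> real) set)"
        by (metis dim_span)
      then show False using dXY by simp
    qed
    then show ?thesis by auto
  qed
  then obtain l where l: "l \<noteq> 0" "\<And>z. z \<in> span {X, Y} \<Longrightarrow> orthogonal l z"
    using orthogonal_to_subspace_exists_gen by metis
  obtain l1 l2 l3 where l123: "l = (l1, l2, l3)" by (cases l) auto
  have oX: "l1 * (a1 \<bullet> u) + l2 * (a2 \<bullet> u) + l3 * (a3 \<bullet> u) = 0"
    using l(2)[of X] span_base[of X "{X,Y}"] unfolding l123 X_def orthogonal_def by simp
  have oY: "l1 * (a1 \<bullet> v) + l2 * (a2 \<bullet> v) + l3 * (a3 \<bullet> v) = 0"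
    using l(2)[of Y] span_base[of Y "{X,Y}"] unfolding l123 Y_def orthogonal_def by simp
  have nz: "l1 \<noteq> 0 \<or> l2 \<noteq> 0 \<or> l3 \<noteq> 0" using l(1) unfolding l123 by (auto simp: zero_prod_def)
  have eq: "\<forall>x\<in>Q. l1 * (a1 \<bullet> x - b1) + l2 * (a2 \<bullet> x - b2) + l3 * (a3 \<bullet> x - b3) = 0"
  proof
    fix x assume "x \<in> Q"
    then have "x \<in> affine hull Q" by (rule hull_inc)
    then have "x - y \<in> V" unfolding V_def by blast
    then obtain k1 k2 w where kw: "w \<in> W" "x - y = k1 *\<^sub>R v + k2 *\<^sub>R u + w" using decomp by blast
    have e: "ai \<bullet> x - bi = k1 * (ai \<bullet> v) + k2 * (ai \<bullet> u)"
      if "R \<subseteq> {x. ai \<bullet> x = bi}" "ai \<bullet> y = bi" for ai bi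
    proof -
      have "ai \<bullet> x - bi = ai \<bullet> (x - y)" using that(2) by (simp add: inner_diff_right)
      also have "\<dots> = k1 * (ai \<bullet> v) + k2 * (ai \<bullet> u) + ai \<bullet> w"
        unfolding kw(2) by (simp add: inner_add_right)
      also have "ai \<bullet> w = 0" using aW[OF kw(1) that] .
      finally show ?thesis by simp
    qed
    have "l1 * (a1 \<bullet> x - b1) + l2 * (a2 \<bullet> x - b2) + l3 * (a3 \<bullet> x - b3)
        = l1 * (k1 * (a1 \<bullet> v) + k2 * (a1 \<bullet> u)) + l2 * (k1 * (a2 \<bullet> v) + k2 * (a2 \<bullet> u))
          + l3 * (k1 * (a3 \<bullet> v) + k2 * (a3 \<bullet> u))"
      using e[OF R1 yb(1)] e[OF R2 yb(2)] e[OF R3 yb(3)] by simp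
    also have "\<dots> = k1 * (l1 * (a1 \<bullet> v) + l2 * (a2 \<bullet> v) + l3 * (a3 \<bullet> v))
                    + k2 * (l1 * (a1 \<bullet> u) + l2 * (a2 \<bullet> u) + l3 * (a3 \<bullet> u))"
      by (simp add: algebra_simps)
    also have "\<dots> = 0" using oX oY by simp
    finally show "l1 * (a1 \<bullet> x - b1) + l2 * (a2 \<bullet> x - b2) + l3 * (a3 \<bullet> x - b3) = 0" .
  qed
  have le: "\<forall>x\<in>Q. (\<lambda>x. a1 \<bullet> x - b1) x \<le> 0" "\<forall>x\<in>Q. (\<lambda>x. a2 \<bullet> x - b2) x \<le> 0"
       "\<forall>x\<in>Q. (\<lambda>x. a3 \<bullet> x - b3) x \<le> 0"
    using a1(2) a2(2) a3(2) by auto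
  have ltg: "\<exists>x\<in>Q. ai \<bullet> x - bi < 0"
    if "Q \<subseteq> {x. ai \<bullet> x \<le> bi}" "Gi = Q \<inter> {x. ai \<bullet> x = bi}" "Gi facet_of Q" for ai bi Gi
  proof (rule ccontr)
    assume "\<not> (\<exists>x\<in>Q. ai \<bullet> x - bi < 0)"
    then have "Q \<subseteq> {x. ai \<bullet> x = bi}" using that(1) by force
    then have "Gi = Q" using that(2) by blast
    then show False using that(3) by simp
  qed
  have Geq: "{x\<in>Q. ai \<bullet> x - bi = 0} = Gi" if "Gi = Q \<inter> {x. ai \<bullet> x = bi}" for ai bi Gi
    using that by auto
  have ns: "\<not> {x\<in>Q. ai \<bullet> x - bi = 0} \<subseteq> {x\<in>Q. aj \<bullet> x - bj = 0}"
    if "Gi = Q \<inter> {x. ai \<bullet> x = bi}" "Gj = Q \<inter> {x. aj \<bullet> x = bj}" "Gi facet_of Q" "Gj facet_of Q" "Gi \<noteq> Gj"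
    for ai bi aj bj Gi Gj
  proof
    assume "{x\<in>Q. ai \<bullet> x - bi = 0} \<subseteq> {x\<in>Q. aj \<bullet> x - bj = 0}"
    then have "Gi \<subseteq> Gj" using Geq[OF that(1)] Geq[OF that(2)] by simp
    then have "Gi = Gj" using facet_subset_eq that(3,4) by blast
    then show False using that(5) by simp
  qed
  show False
  proof (rule sign_contra[of Q l1 "\<lambda>x. a1 \<bullet> x - b1" l2 "\<lambda>x. a2 \<bullet> x - b2" l3 "\<lambda>x. a3 \<bullet> x - b3"])
    show "\<forall>x\<in>Q. l1 * (a1 \<bullet> x - b1) + l2 * (a2 \<bullet> x - b2) + l3 * (a3 \<bullet> x - b3) = 0" by (rule eq)
    show "l1 \<noteq> 0 \<or> l2 \<noteq> 0 \<or> l3 \<noteq> 0" by (rule nz)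
    show "\<forall>x\<in>Q. a1 \<bullet> x - b1 \<le> 0" "\<forall>x\<in>Q. a2 \<bullet> x - b2 \<le> 0" "\<forall>x\<in>Q. a3 \<bullet> x - b3 \<le> 0"
      using le by auto
    show "\<exists>x\<in>Q. a1 \<bullet> x - b1 < 0" using ltg[OF a1(2,3) G(1)] .
    show "\<exists>x\<in>Q. a2 \<bullet> x - b2 < 0" using ltg[OF a2(2,3) G(2)] .
    show "\<exists>x\<in>Q. a3 \<bullet> x - b3 < 0" using ltg[OF a3(2,3) G(3)] .
    show "\<not> {x\<in>Q. a1 \<bullet> x - b1 = 0} \<subseteq> {x\<in>Q. a2 \<bullet> x - b2 = 0}" using ns[OF a1(3) a2(3) G(1,2) d(1)] .
    show "\<not> {x\<in>Q. a1 \<bullet> x - b1 = 0} \<subseteq> {x\<in>Q. a3 \<bullet> x - b3 = 0}" using ns[OF a1(3) a3(3) G(1,3) d(2)] .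
    show "\<not> {x\<in>Q. a2 \<bullet> x - b2 = 0} \<subseteq> {x\<in>Q. a1 \<bullet> x - b1 = 0}" using ns[OF a2(3) a1(3) G(2,1) d(1)[symmetric]] .
    show "\<not> {x\<in>Q. a2 \<bullet> x - b2 = 0} \<subseteq> {x\<in>Q. a3 \<bullet> x - b3 = 0}" using ns[OF a2(3) a3(3) G(2,3) d(3)] .
    show "\<not> {x\<in>Q. a3 \<bullet> x - b3 = 0} \<subseteq> {x\<in>Q. a1 \<bullet> x - b1 = 0}" using ns[OF a3(3) a1(3) G(3,1) d(2)[symmetric]] .
    show "\<not> {x\<in>Q. a3 \<bullet> x - b3 = 0} \<subseteq> {x\<in>Q. a2 \<bullet> x - b2 = 0}" using ns[OF a3(3) a2(3) G(3,2) d(3)[symmetric]] .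
  qed
qed



lemma aff_dim_insert_le: "aff_dim (insert a S) \<le> aff_dim S + 1"
  for a :: "'a::euclidean_space"
  by (simp add: aff_dim_insert)

lemma facets_connected:
  fixes Q :: "'a::euclidean_space set"
  assumes Q: "polytope Q" and d2: "2 \<le> aff_dim Q"
    and S: "S \<subseteq> {F. F facet_of Q}" "S \<noteq> {}"
    and nr: "\<And>F G. F \<in> S \<Longrightarrow> G facet_of Q \<Longrightarrow> G \<notin> S \<Longrightarrow> aff_dim (F \<inter> G) \<noteq> aff_dim Q - 2"
  shows "S = {F. F facet_of Q}"
proof (rule ccontr)
  assume "S \<noteq> {F. F facet_of Q}"
  then obtain G where G: "G facet_of Q" "G \<notin> S" using S(1) by blast
  obtain F where F: "F \<in> S" using S(2) by blast
  have Ff: "F facet_of Q" using F S(1) by blast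
  define d where "d = aff_dim Q"
  define Ks where "Ks = {K. K face_of Q \<and> aff_dim K \<le> d - 3}"
  have fK: "finite Ks"
    by (rule finite_subset[OF _ finite_polytope_faces[OF Q]]) (auto simp: Ks_def)
  have cQ: "convex Q" using Q by (rule polytope_imp_convex)
  have adF: "aff_dim F = d - 1" using Ff unfolding facet_of_def d_def by simp
  have adG: "aff_dim G = d - 1" using G(1) unfolding facet_of_def d_def by simp
  have FQ: "F face_of Q" "F \<noteq> {}" using Ff unfolding facet_of_def by auto
  have GQ: "G face_of Q" "G \<noteq> {}" using G(1) unfolding facet_of_def by auto
  have FneQ: "F \<noteq> Q" using Ff by auto
  have GneQ: "G \<noteq> Q" using G(1) by auto
  have "\<exists>p\<in>rel_interior F. p \<notin> \<Union>((\<lambda>K. affine hull K) ` Ks)"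
  proof (rule avoid_affine)
    show "finite ((\<lambda>K. affine hull K) ` Ks)" using fK by simp
    show "convex F" using FQ(1) by (rule face_of_imp_convex)
    show "F \<noteq> {}" by (rule FQ(2))
    show "\<forall>A\<in>(\<lambda>K. affine hull K) ` Ks. affine A \<and> aff_dim A < aff_dim F"
      using adF by (auto simp: Ks_def)
  qed
  then obtain p where p: "p \<in> rel_interior F" "p \<notin> \<Union>((\<lambda>K. affine hull K) ` Ks)" by blast
  have "\<exists>q\<in>rel_interior G. q \<notin> \<Union>((\<lambda>K. affine hull (insert p K)) ` Ks)"
  proof (rule avoid_affine)
    show "finite ((\<lambda>K. affine hull (insert p K)) ` Ks)" using fK by simp
    show "convex G" using GQ(1) by (rule face_of_imp_convex)
    show "G \<noteq> {}" by (rule GQ(2))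
    show "\<forall>A\<in>(\<lambda>K. affine hull (insert p K)) ` Ks. affine A \<and> aff_dim A < aff_dim G"
    proof
      fix A assume "A \<in> (\<lambda>K. affine hull (insert p K)) ` Ks"
      then obtain K where K: "K \<in> Ks" "A = affine hull (insert p K)" by blast
      have "aff_dim (insert p K) \<le> aff_dim K + 1" by (rule aff_dim_insert_le)
      then show "affine A \<and> aff_dim A < aff_dim G" using K adG by (auto simp: Ks_def)
    qed
  qed
  then obtain q where q: "q \<in> rel_interior G" "q \<notin> \<Union>((\<lambda>K. affine hull (insert p K)) ` Ks)" by blast
  have "\<exists>c\<in>rel_interior Q. c \<notin> \<Union>(insert (affine hull {p,q}) ((\<lambda>K. affine hull (insert p (insert q K))) ` Ks))"
  proof (rule avoid_affine)
    show "finite (insert (affine hull {p,q}) ((\<lambda>K. affine hull (insert p (insert q K))) ` Ks))" using fK by simp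
    show "convex Q" by (rule cQ)
    show "Q \<noteq> {}" using FQ face_of_imp_subset by blast
    have "aff_dim {p,q} \<le> 1" using aff_dim_insert_le[of p "{q}"] by simp
    then have A1: "affine (affine hull {p,q}) \<and> aff_dim (affine hull {p,q}) < aff_dim Q"
      using d2 by simp
    have A2: "affine A \<and> aff_dim A < aff_dim Q"
      if hA: "A \<in> (\<lambda>K. affine hull (insert p (insert q K))) ` Ks" for A
    proof -
      obtain K where K: "K \<in> Ks" "A = affine hull (insert p (insert q K))" using hA by blast
      have "aff_dim (insert p (insert q K)) \<le> aff_dim (insert q K) + 1" by (rule aff_dim_insert_le)
      moreover have "aff_dim (insert q K) \<le> aff_dim K + 1" by (rule aff_dim_insert_le)
      ultimately show ?thesis using K by (auto simp: Ks_def d_def)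
    qed
    show "\<forall>A\<in>insert (affine hull {p,q}) ((\<lambda>K. affine hull (insert p (insert q K))) ` Ks). affine A \<and> aff_dim A < aff_dim Q"
      using A1 A2 by blast
  qed
  then obtain c where c: "c \<in> rel_interior Q" "c \<notin> affine hull {p,q}"
    "c \<notin> \<Union>((\<lambda>K. affine hull (insert p (insert q K))) ` Ks)" by blast
  define PL where "PL = affine hull {c,p,q}"
  define T where "T = Q \<inter> PL"
  have pF: "p \<in> F" using p(1) rel_interior_subset by blast
  have qG: "q \<in> G" using q(1) rel_interior_subset by blast
  have p_rf: "p \<in> rel_frontier Q" using face_of_subset_rel_frontier[OF FQ(1) FneQ] pF by blast
  have q_rf: "q \<in> rel_frontier Q" using face_of_subset_rel_frontier[OF GQ(1) GneQ] qG by blast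
  have pq: "p \<noteq> q"
  proof
    assume "p = q"
    then have "G \<inter> rel_interior F \<noteq> {}" using p(1) qG by blast
    then have "F \<subseteq> G" using subset_of_face_of[OF GQ(1)] FQ(1) face_of_imp_subset by blast
    then have "F = G" using facet_subset_eq Ff G(1) by blast
    then show False using F G(2) by simp
  qed
  have affPi: "affine PL" unfolding PL_def by simp
  have cPi: "c \<in> PL" "p \<in> PL" "q \<in> PL" unfolding PL_def by (auto intro: hull_inc)
  have riT: "rel_interior Q \<inter> PL \<noteq> {}" using c(1) cPi by blast
  have "aff_dim {q} = 0" by simp
  have "p \<notin> affine hull {q}" using pq by simp
  then have ad2: "aff_dim {p,q} = 1" by (simp add: aff_dim_insert)
  have ad3: "aff_dim {c,p,q} = 2" using c(2) ad2 by (simp add: aff_dim_insert)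
  have "{c,p,q} \<subseteq> T" unfolding T_def using cPi c(1) rel_interior_subset pF qG FQ(1) GQ(1)
    by (auto dest: face_of_imp_subset)
  then have "aff_dim {c,p,q} \<le> aff_dim T" by (rule aff_dim_subset)
  then have aT: "aff_dim T \<noteq> 1" using ad3 by simp
  have convT: "convex T" unfolding T_def using cQ affPi by (simp add: convex_Int affine_imp_convex)
  have bT: "bounded T" unfolding T_def using polytope_imp_bounded[OF Q] by (simp add: bounded_Int)
  have conn: "connected (rel_frontier T)" using connected_sphere_gen[OF convT bT aT] .
  have e1: "rel_interior T = rel_interior Q \<inter> PL"
    unfolding T_def using convex_affine_rel_interior_Int[OF cQ affPi riT] .
  have e2: "closure T = closure Q \<inter> PL"
    unfolding T_def using convex_affine_closure_Int[OF cQ affPi riT] .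
  have rfT: "rel_frontier T = rel_frontier Q \<inter> PL"
    unfolding rel_frontier_def e1 e2 by blast
  have pQ': "polyhedron Q" using Q by (rule polytope_imp_polyhedron)
  have rfQ: "rel_frontier Q = \<Union>{F. F facet_of Q}" by (rule rel_frontier_of_polyhedron[OF pQ'])
  have finF: "finite {F. F facet_of Q}" using finite_polytope_facets[OF Q] by simp
  have clo: "closed X" if "X facet_of Q" for X
    using that polytope_imp_closed face_of_polytope_polytope[OF Q] facet_of_imp_face_of by blast
  define A where "A = \<Union>S"
  define B where "B = \<Union>({F. F facet_of Q} - S)"
  have cA: "closed A" unfolding A_def
    using finite_subset[OF S(1) finF] clo S(1) by (intro closed_Union) auto
  have cB: "closed B" unfolding B_def
    using finF clo by (intro closed_Union) auto
  have cov: "rel_frontier T \<subseteq> A \<union> B" unfolding rfT rfQ A_def B_def using S(1) by blast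
  have nA: "A \<inter> rel_frontier T \<noteq> {}" unfolding A_def rfT using F pF p_rf cPi by blast
  have nB: "B \<inter> rel_frontier T \<noteq> {}" unfolding B_def rfT using G qG q_rf cPi by blast
  have "A \<inter> B \<inter> rel_frontier T \<noteq> {}"
    using conn cA cB cov nA nB unfolding connected_closed by blast
  then obtain z F1 G1 where z: "z \<in> F1" "F1 \<in> S" "z \<in> G1" "G1 facet_of Q" "G1 \<notin> S" "z \<in> PL"
    unfolding A_def B_def rfT by blast
  have F1f: "F1 facet_of Q" using z(2) S(1) by blast
  define K where "K = F1 \<inter> G1"
  have KQ: "K face_of Q" unfolding K_def
    using face_of_Int F1f z(4) facet_of_imp_face_of by blast
  have "F1 \<noteq> G1" using z(2,5) by blast
  have "K \<noteq> F1"
  proof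
    assume "K = F1"
    then have "F1 \<subseteq> G1" unfolding K_def by blast
    then have "F1 = G1" using facet_subset_eq F1f z(4) by blast
    then show False using \<open>F1 \<noteq> G1\<close> by simp
  qed
  moreover have "K face_of F1"
    using face_of_subset[OF KQ] F1f facet_of_imp_subset unfolding K_def by blast
  ultimately have "aff_dim K < aff_dim F1"
    using face_of_aff_dim_lt F1f facet_of_imp_face_of face_of_imp_convex by blast
  moreover have "aff_dim F1 = d - 1" using F1f unfolding facet_of_def d_def by simp
  moreover have "aff_dim K \<noteq> d - 2" unfolding K_def d_def using nr[OF z(2) z(4) z(5)] .
  ultimately have "aff_dim K \<le> d - 3" by linarith
  then have KK: "K \<in> Ks" using KQ unfolding Ks_def by blast
  have zK: "z \<in> K" unfolding K_def using z by blast
  show False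
  proof (rule plane_avoid[of z K c p q])
    show "z \<in> K" by (rule zK)
    show "z \<in> affine hull {c,p,q}" using z(6) unfolding PL_def .
    show "c \<notin> affine hull (insert p (insert q K))" using c(3) KK by blast
    show "q \<notin> affine hull (insert p K)" using q(2) KK by blast
    show "p \<notin> affine hull K" using p(2) KK by blast
  qed
qed



lemma fp_iff: "x \<in> face_poset P \<longleftrightarrow> x face_of P \<and> x \<noteq> {} \<and> x \<noteq> P"
  by (simp add: face_poset_def)

lemma facet_in_fp: "F facet_of P \<Longrightarrow> F \<in> face_poset P"
  unfolding fp_iff facet_of_def by auto

lemma fp_sub:
  assumes "F \<in> face_poset P" "x \<in> face_poset F"
  shows "x \<in> face_poset P"
proof -
  have F: "F face_of P" "F \<noteq> P" using assms(1) unfolding fp_iff by auto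
  have x: "x face_of F" "x \<noteq> {}" "x \<noteq> F" using assms(2) unfolding fp_iff by auto
  have "x face_of P" using face_of_trans x(1) F(1) by blast
  moreover have "x \<noteq> P"
  proof
    assume "x = P"
    then have "P \<subseteq> F" using x(1) face_of_imp_subset by blast
    then have "F = P" using F(1) face_of_imp_subset by blast
    then show False using F(2) by simp
  qed
  ultimately show ?thesis using x(2) unfolding fp_iff by blast
qed

lemma aff_dim_nonneg: "S \<noteq> {} \<Longrightarrow> 0 \<le> aff_dim S"
  for S :: "'a::euclidean_space set"
  using aff_dim_empty[of S] aff_dim_geq[of S] by linarith

lemma fp_empty:
  fixes P :: "'a::euclidean_space set"
  assumes "convex P" "aff_dim P \<le> 0"
  shows "face_poset P = {}"
proof (rule ccontr)
  assume "face_poset P \<noteq> {}"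
  then obtain x where "x \<in> face_poset P" by blast
  then have x: "x face_of P" "x \<noteq> {}" "x \<noteq> P" unfolding fp_iff by auto
  have "aff_dim x < aff_dim P" using face_of_aff_dim_lt assms(1) x(1,3) by blast
  then show False using aff_dim_nonneg[OF x(2)] assms(2) by linarith
qed

lemma fp_dim1:
  fixes P :: "'a::euclidean_space set"
  assumes "convex P" "aff_dim P = 1" "x \<in> face_poset P"
  shows "x facet_of P"
proof -
  have x: "x face_of P" "x \<noteq> {}" "x \<noteq> P" using assms(3) unfolding fp_iff by auto
  have "aff_dim x < aff_dim P" using face_of_aff_dim_lt assms(1) x(1,3) by blast
  then have "aff_dim x = aff_dim P - 1" using aff_dim_nonneg[OF x(2)] assms(2) by linarith
  then show ?thesis unfolding facet_of_def using x by blast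
qed

lemma dim1_two:
  fixes P :: "'a::euclidean_space set"
  assumes "polytope P" "aff_dim P = 1"
  shows "\<exists>a b. a \<noteq> b \<and> face_poset P = {{a},{b}}"
proof -
  have "aff_dim P \<le> 1" using assms(2) by simp
  then obtain n where n: "n simplex P" using polytope_lowdim_imp_simplex[OF assms(1)] by blast
  have "n = 1" using aff_dim_simplex[OF n] assms(2) by simp
  then obtain C where C: "\<not> affine_dependent C" "int (card C) = 2" "P = convex hull C"
    using n unfolding simplex_def by auto
  have "card C = 2" using C(2) by simp
  then obtain a b where ab: "a \<noteq> b" "C = {a,b}" by (auto simp: card_2_iff)
  have cP: "convex P" using assms(1) by (rule polytope_imp_convex)
  have fac: "x facet_of P \<longleftrightarrow> x \<noteq> {} \<and> (\<exists>u. u \<in> C \<and> x = convex hull (C - {u}))" for x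
    unfolding C(3) by (rule facet_of_convex_hull_affine_independent[OF C(1)])
  have Ca: "C - {a} = {b}" and Cb: "C - {b} = {a}" using ab by auto
  have "face_poset P = {{a},{b}}"
  proof (intro equalityI subsetI)
    fix x assume "x \<in> face_poset P"
    then have "x facet_of P" using fp_dim1[OF cP assms(2)] by simp
    then obtain u where u: "u \<in> C" "x = convex hull (C - {u})" unfolding fac by auto
    have "u = a \<or> u = b" using u(1) ab(2) by simp
    then show "x \<in> {{a},{b}}"
    proof
      assume "u = a"
      then show ?thesis using u(2) Ca by simp
    next
      assume "u = b"
      then show ?thesis using u(2) Cb by simp
    qed
  next
    fix x assume x: "x \<in> {{a},{b}}"
    then have "x = {a} \<or> x = {b}" by simp
    then have "x facet_of P"
    proof
      assume xa: "x = {a}"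
      have "b \<in> C" "x = convex hull (C - {b})" using xa Cb ab(2) by simp_all
      moreover have "x \<noteq> {}" using xa by simp
      ultimately show ?thesis unfolding fac by blast
    next
      assume xb: "x = {b}"
      have "a \<in> C" "x = convex hull (C - {a})" using xb Ca ab(2) by simp_all
      moreover have "x \<noteq> {}" using xb by simp
      ultimately show ?thesis unfolding fac by blast
    qed
    then show "x \<in> face_poset P" by (rule facet_in_fp)
  qed
  then show ?thesis using ab(1) by blast
qed




lemma main_ind:
  fixes P :: "'a::euclidean_space set" and P' :: "'b::euclidean_space set"
    and \<phi> :: "'a set \<Rightarrow> 'b set"
  assumes "polytope P" "polytope P'" "aff_dim P' \<le> aff_dim P"
    "\<phi> \<in> face_poset P \<rightarrow> face_poset P'"
    "\<And>x y. x \<in> face_poset P \<Longrightarrow> y \<in> face_poset P \<Longrightarrow> (\<phi> x \<subseteq> \<phi> y \<longleftrightarrow> x \<subseteq> y)"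
  shows "bij_betw \<phi> (face_poset P) (face_poset P') \<and> (\<forall>x\<in>face_poset P. aff_dim (\<phi> x) = aff_dim x)
         \<and> (1 \<le> aff_dim P \<longrightarrow> aff_dim P' = aff_dim P)"
  using assms
proof (induction "nat (aff_dim P)" arbitrary: P P' \<phi> rule: less_induct)
  case less
  note P = less.prems(1) and P' = less.prems(2) and dd = less.prems(3)
    and ph = less.prems(4) and ord = less.prems(5)
  define d where "d = aff_dim P"
  have cP: "convex P" using P by (rule polytope_imp_convex)
  have cP': "convex P'" using P' by (rule polytope_imp_convex)
  have phin: "\<phi> x \<in> face_poset P'" if "x \<in> face_poset P" for x using ph that by (rule funcset_mem)
  have inj: "inj_on \<phi> (face_poset P)"
  proof (rule inj_onI)
    fix x y assume xy: "x \<in> face_poset P" "y \<in> face_poset P" "\<phi> x = \<phi> y"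
    have "x \<subseteq> y" using ord[OF xy(1) xy(2)] xy(3) by simp
    moreover have "y \<subseteq> x" using ord[OF xy(2) xy(1)] xy(3) by simp
    ultimately show "x = y" by (rule subset_antisym)
  qed
  have injE: "\<phi> x \<noteq> \<phi> y" if "x \<in> face_poset P" "y \<in> face_poset P" "x \<noteq> y" for x y
    using inj_onD[OF inj _ that(1) that(2)] that(3) by blast
  consider "d \<le> 0" | "d = 1" | "2 \<le> d" by linarith
  then show ?case
  proof cases
    case 1
    have e1: "face_poset P = {}" using fp_empty[OF cP] 1 d_def by simp
    have e2: "face_poset P' = {}" using fp_empty[OF cP'] 1 d_def dd by simp
    show ?thesis using e1 e2 1 d_def by (simp add: bij_betw_def)
  next
    case 2
    obtain a b where ab: "a \<noteq> b" "face_poset P = {{a},{b}}" using dim1_two[OF P] 2 d_def by auto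
    have ina: "\<phi> {a} \<in> face_poset P'" and inb: "\<phi> {b} \<in> face_poset P'" using phin ab(2) by auto
    have nab: "\<phi> {a} \<noteq> \<phi> {b}" using injE[of "{a}" "{b}"] ab by auto
    have "face_poset P' \<noteq> {}" using ina by blast
    then have "\<not> aff_dim P' \<le> 0" using fp_empty[OF cP'] by blast
    then have d1': "aff_dim P' = 1" using dd 2 d_def by linarith
    obtain a' b' where ab': "a' \<noteq> b'" "face_poset P' = {{a'},{b'}}" using dim1_two[OF P' d1'] by auto
    have img: "\<phi> ` face_poset P = {\<phi> {a}, \<phi> {b}}" using ab(2) by simp
    have sub: "{\<phi> {a}, \<phi> {b}} \<subseteq> face_poset P'" using ina inb by simp
    have c1: "card {\<phi> {a}, \<phi> {b}} = 2" using nab by simp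
    have c2: "card (face_poset P') = 2" using ab' by simp
    have "{\<phi> {a}, \<phi> {b}} = face_poset P'"
      using card_subset_eq[OF _ sub] c1 c2 ab'(2) by simp
    then have bij: "bij_betw \<phi> (face_poset P) (face_poset P')"
      unfolding bij_betw_def using inj img by simp
    have dims: "\<forall>x\<in>face_poset P. aff_dim (\<phi> x) = aff_dim x"
    proof
      fix x assume x: "x \<in> face_poset P"
      have "x facet_of P" using fp_dim1[OF cP _ x] 2 d_def by simp
      moreover have "\<phi> x facet_of P'" using fp_dim1[OF cP' d1' phin[OF x]] .
      ultimately show "aff_dim (\<phi> x) = aff_dim x" using 2 d_def d1' unfolding facet_of_def by simp
    qed
    show ?thesis using bij dims d1' 2 d_def by simp
  next
    case 3
    have IHF: "bij_betw \<phi> (face_poset F) (face_poset (\<phi> F)) \<and> (\<forall>x\<in>face_poset F. aff_dim (\<phi> x) = aff_dim x)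
               \<and> aff_dim (\<phi> F) = aff_dim F" if F: "F facet_of P" for F
    proof -
      have FP: "F \<in> face_poset P" using F by (rule facet_in_fp)
      have adF: "aff_dim F = d - 1" using F unfolding facet_of_def d_def by simp
      have pF: "polytope F" using face_of_polytope_polytope[OF P] F facet_of_imp_face_of by blast
      have phF: "\<phi> F face_of P'" "\<phi> F \<noteq> {}" "\<phi> F \<noteq> P'" using phin[OF FP] unfolding fp_iff by auto
      have pphF: "polytope (\<phi> F)" using face_of_polytope_polytope[OF P' phF(1)] .
      have "aff_dim (\<phi> F) < aff_dim P'" using face_of_aff_dim_lt[OF cP' phF(1) phF(3)] .
      then have adphF: "aff_dim (\<phi> F) \<le> aff_dim F" using adF dd d_def by linarith
      have phiF: "\<phi> \<in> face_poset F \<rightarrow> face_poset (\<phi> F)"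
      proof
        fix x assume x: "x \<in> face_poset F"
        have xP: "x \<in> face_poset P" using fp_sub[OF FP x] .
        have xF: "x \<subseteq> F" "x \<noteq> F" using x unfolding fp_iff by (auto dest: face_of_imp_subset)
        have s: "\<phi> x \<subseteq> \<phi> F" using ord[OF xP FP] xF(1) by simp
        have n: "\<phi> x \<noteq> \<phi> F" using injE[OF xP FP xF(2)] .
        have f: "\<phi> x face_of P'" "\<phi> x \<noteq> {}" using phin[OF xP] unfolding fp_iff by auto
        have "\<phi> x face_of \<phi> F" using face_of_subset[OF f(1) s] phF(1) face_of_imp_subset by blast
        then show "\<phi> x \<in> face_poset (\<phi> F)" using f(2) n unfolding fp_iff by blast
      qed
      have ordF: "\<phi> x \<subseteq> \<phi> y \<longleftrightarrow> x \<subseteq> y" if "x \<in> face_poset F" "y \<in> face_poset F" for x y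
        using ord[OF fp_sub[OF FP that(1)] fp_sub[OF FP that(2)]] .
      have lt: "nat (aff_dim F) < nat (aff_dim P)" using adF 3 d_def by simp
      have R: "bij_betw \<phi> (face_poset F) (face_poset (\<phi> F)) \<and> (\<forall>x\<in>face_poset F. aff_dim (\<phi> x) = aff_dim x)
         \<and> (1 \<le> aff_dim F \<longrightarrow> aff_dim (\<phi> F) = aff_dim F)"
        using less.hyps[OF lt pF pphF adphF phiF ordF] .
      then show ?thesis using adF 3 by simp
    qed
    have "0 < aff_dim P" using 3 d_def by simp
    then obtain F0 where F0: "F0 facet_of P" using polytope_facet_exists[OF P] by blast
    have phF0: "\<phi> F0 face_of P'" "\<phi> F0 \<noteq> P'" using phin[OF facet_in_fp[OF F0]] unfolding fp_iff by auto
    have "aff_dim (\<phi> F0) < aff_dim P'" using face_of_aff_dim_lt[OF cP' phF0] .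
    moreover have "aff_dim (\<phi> F0) = d - 1" using IHF[OF F0] F0 unfolding facet_of_def d_def by simp
    ultimately have dP': "aff_dim P' = d" using dd d_def by linarith
    have phfacet: "\<phi> F facet_of P'" if F: "F facet_of P" for F
    proof -
      have "\<phi> F face_of P'" "\<phi> F \<noteq> {}" using phin[OF facet_in_fp[OF F]] unfolding fp_iff by auto
      moreover have "aff_dim (\<phi> F) = aff_dim P' - 1" using IHF[OF F] F dP' unfolding facet_of_def d_def by simp
      ultimately show ?thesis unfolding facet_of_def by blast
    qed
    have pP: "polyhedron P" using P by (rule polytope_imp_polyhedron)
    have pP': "polyhedron P'" using P' by (rule polytope_imp_polyhedron)
    have dims: "\<forall>x\<in>face_poset P. aff_dim (\<phi> x) = aff_dim x"
    proof
      fix x assume x: "x \<in> face_poset P"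
      show "aff_dim (\<phi> x) = aff_dim x"
      proof (cases "x facet_of P")
        case True
        then show ?thesis using IHF[OF True] by blast
      next
        case False
        have xf: "x face_of P" "x \<noteq> {}" "x \<noteq> P" using x unfolding fp_iff by auto
        obtain F where F: "F facet_of P" "x \<subseteq> F" using face_of_polyhedron_subset_facet[OF pP xf] by blast
        have "x \<noteq> F" using False F(1) by blast
        moreover have "x face_of F" using face_of_subset[OF xf(1) F(2)] F(1) facet_of_imp_subset by blast
        ultimately have "x \<in> face_poset F" using xf(2) unfolding fp_iff by blast
        then show ?thesis using IHF[OF F(1)] by blast
      qed
    qed
    define S where "S = \<phi> ` {F. F facet_of P}"
    have SF: "S = {G. G facet_of P'}"
    proof (rule facets_connected[OF P'])
      show "2 \<le> aff_dim P'" using dP' 3 by simp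
      show "S \<subseteq> {F. F facet_of P'}" unfolding S_def using phfacet by blast
      show "S \<noteq> {}" unfolding S_def using F0 by blast
      fix F1 G1 assume F1: "F1 \<in> S" and G1: "G1 facet_of P'" "G1 \<notin> S"
      show "aff_dim (F1 \<inter> G1) \<noteq> aff_dim P' - 2"
      proof
        assume adR: "aff_dim (F1 \<inter> G1) = aff_dim P' - 2"
        obtain F where F: "F facet_of P" "F1 = \<phi> F" using F1 unfolding S_def by blast
        define R where "R = F1 \<inter> G1"
        have F1f: "F1 facet_of P'" using phfacet F by blast
        have RP': "R face_of P'" unfolding R_def
          using face_of_Int F1f G1(1) facet_of_imp_face_of by blast
        have RF1: "R \<subseteq> F1" unfolding R_def by blast
        have Rne: "R \<noteq> {}"
        proof
          assume "R = {}"
          then show False using adR 3 dP' unfolding R_def by simp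
        qed
        have adR': "aff_dim R = aff_dim P' - 2" using adR unfolding R_def .
        have "R \<noteq> F1"
        proof
          assume "R = F1"
          then have "aff_dim F1 = aff_dim P' - 2" using adR' by simp
          then show False using F1f unfolding facet_of_def by simp
        qed
        moreover have "R face_of F1" using face_of_subset[OF RP' RF1] F1f facet_of_imp_subset by blast
        ultimately have "R \<in> face_poset F1" using Rne unfolding fp_iff by blast
        then have "R \<in> face_poset (\<phi> F)" using F(2) by simp
        moreover have "\<phi> ` face_poset F = face_poset (\<phi> F)" using IHF[OF F(1)] by (simp add: bij_betw_def)
        ultimately have "R \<in> \<phi> ` face_poset F" by simp
        then obtain r where r: "r \<in> face_poset F" "\<phi> r = R" by (auto elim: imageE)
        have FP: "F \<in> face_poset P" using F(1) by (rule facet_in_fp)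
        have rP: "r \<in> face_poset P" using fp_sub[OF FP r(1)] .
        have "aff_dim (\<phi> r) = aff_dim r" using IHF[OF F(1)] r(1) by blast
        then have adr: "aff_dim r = d - 2" using r(2) adR' dP' by simp
        have rf: "r face_of P" "r \<noteq> {}" "r \<noteq> P" using rP unfolding fp_iff by auto
        have rF: "r \<subseteq> F" using r(1) unfolding fp_iff by (auto dest: face_of_imp_subset)
        have rI: "r = \<Inter>{F'. F' facet_of P \<and> r \<subseteq> F'}" using face_of_polyhedron[OF pP rf] .
        have "\<exists>F2. F2 facet_of P \<and> r \<subseteq> F2 \<and> F2 \<noteq> F"
        proof (rule ccontr)
          assume H: "\<not> (\<exists>F2. F2 facet_of P \<and> r \<subseteq> F2 \<and> F2 \<noteq> F)"
          have eqF: "{F'. F' facet_of P \<and> r \<subseteq> F'} = {F}"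
          proof (intro equalityI subsetI)
            fix X assume "X \<in> {F'. F' facet_of P \<and> r \<subseteq> F'}"
            then have X: "X facet_of P" "r \<subseteq> X" by auto
            have "X = F"
            proof (rule ccontr)
              assume "X \<noteq> F"
              then show False using H X by blast
            qed
            then show "X \<in> {F}" by simp
          next
            fix X assume "X \<in> {F}"
            then have "X = F" by simp
            then show "X \<in> {F'. F' facet_of P \<and> r \<subseteq> F'}" using F(1) rF by simp
          qed
          have "r = \<Inter>{F}" by (subst eqF[symmetric]) (rule rI)
          then have "r = F" by simp
          then have "aff_dim F = d - 2" using adr by simp
          moreover have "aff_dim F = d - 1" using F(1) unfolding facet_of_def d_def by simp
          ultimately show False by simp
        qed
        then obtain F2 where F2: "F2 facet_of P" "r \<subseteq> F2" "F2 \<noteq> F" by blast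
        have F2P: "F2 \<in> face_poset P" using F2(1) by (rule facet_in_fp)
        have RF2: "R \<subseteq> \<phi> F2" using ord[OF rP F2P] F2(2) r(2) by simp
        have n1: "\<phi> F2 \<noteq> F1" using injE[OF F2P FP F2(3)] F(2) by simp
        have n2: "\<phi> F2 \<noteq> G1"
        proof
          assume "\<phi> F2 = G1"
          moreover have "\<phi> F2 \<in> S" unfolding S_def using F2(1) by blast
          ultimately show False using G1(2) by simp
        qed
        have n3: "F1 \<noteq> G1" using G1(2) F1 by blast
        have RG1: "R \<subseteq> G1" unfolding R_def by blast
        show False
          by (rule ridge_at_most_two[OF P' RP' Rne adR' F1f G1(1) phfacet[OF F2(1)] RF1 RG1 RF2 n3 n1[symmetric] n2[symmetric]])
      qed
    qed
    have surj: "\<phi> ` face_poset P = face_poset P'"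
    proof (intro equalityI subsetI)
      fix y assume "y \<in> \<phi> ` face_poset P"
      then show "y \<in> face_poset P'" using phin by blast
    next
      fix y assume y: "y \<in> face_poset P'"
      show "y \<in> \<phi> ` face_poset P"
      proof (cases "y facet_of P'")
        case True
        then have "y \<in> S" using SF by blast
        then obtain F where "F facet_of P" "y = \<phi> F" unfolding S_def by blast
        then show ?thesis using facet_in_fp by blast
      next
        case False
        have yf: "y face_of P'" "y \<noteq> {}" "y \<noteq> P'" using y unfolding fp_iff by auto
        obtain G where G: "G facet_of P'" "y \<subseteq> G" using face_of_polyhedron_subset_facet[OF pP' yf] by blast
        have "G \<in> S" using G(1) SF by blast
        then obtain F where F: "F facet_of P" "G = \<phi> F" unfolding S_def by blast
        have "y \<noteq> G" using False G(1) by blast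
        moreover have "y face_of G" using face_of_subset[OF yf(1) G(2)] G(1) facet_of_imp_subset by blast
        ultimately have "y \<in> face_poset G" using yf(2) unfolding fp_iff by blast
        then have "y \<in> face_poset (\<phi> F)" using F(2) by simp
        moreover have "\<phi> ` face_poset F = face_poset (\<phi> F)" using IHF[OF F(1)] by (simp add: bij_betw_def)
        ultimately have "y \<in> \<phi> ` face_poset F" by simp
        then obtain x where x: "x \<in> face_poset F" "\<phi> x = y" by (auto elim: imageE)
        have "x \<in> face_poset P" using fp_sub[OF facet_in_fp[OF F(1)] x(1)] .
        then show ?thesis using x(2) by blast
      qed
    qed
    have bij: "bij_betw \<phi> (face_poset P) (face_poset P')" unfolding bij_betw_def using inj surj by blast
    show ?thesis using bij dims dP' d_def by simp
  qed
qed

theorem lemma3p3: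
  fixes P :: "'a::euclidean_space set" and P' :: "'b::euclidean_space set"
    and \<phi> :: "'a set \<Rightarrow> 'b set"
  assumes "polytope P" and "polytope P'"
    and "aff_dim P \<ge> aff_dim P'"
    and "\<phi> \<in> face_poset P \<rightarrow> face_poset P'"
    and "\<And>x y. x \<in> face_poset P \<Longrightarrow> y \<in> face_poset P \<Longrightarrow> (\<phi> x \<subseteq> \<phi> y \<longleftrightarrow> x \<subseteq> y)"
  shows "bij_betw \<phi> (face_poset P) (face_poset P')"
  using main_ind[OF assms] by blast


end
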